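(* Let $G$ be a nilpotent group of class $k$, let $v(\bar x,\bar z)$ be a group word in variables $\bar x=(x_1,\dots,x_n)$, $\bar z$ and their inverses, and let $\bar g$ be a tuple of elements of $G$ (of the length of $\bar z$) and $c\in G$. If the set $\{\bar h\in G^n:v(\bar h,\bar g)=c\}$ is $2^k$-large in $G^n$, then $v(\bar h,\bar g)=c$ for all $\bar h\in G^n$.
   Context: A subset $X$ of a group $K$ is $m$-large in $K$ if the intersection of any $m$ left translates $a_1X\cap\dots\cap a_mX$ ($a_i\in K$) is non-empty. *)

theory Defs
  imports "HOL-Algebra.Algebra"
begin

text \<open>Commutator set [A, B] and lower central series
  gamma 0 = G, gamma (Suc i) = subgroup generated by commutators [a, b], a in gamma i, b in G.
  (So gamma i is the (i+1)-th term of the lower central series in the usual 1-based indexing.)\<close>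

definition commutator_set :: "('a, 'b) monoid_scheme \<Rightarrow> 'a set \<Rightarrow> 'a set \<Rightarrow> 'a set" where
  "commutator_set G A B =
     (\<Union>a \<in> A. \<Union>b \<in> B. {inv\<^bsub>G\<^esub> a \<otimes>\<^bsub>G\<^esub> inv\<^bsub>G\<^esub> b \<otimes>\<^bsub>G\<^esub> a \<otimes>\<^bsub>G\<^esub> b})"

fun lower_central :: "('a, 'b) monoid_scheme \<Rightarrow> nat \<Rightarrow> 'a set" where
  "lower_central G 0 = carrier G"
| "lower_central G (Suc i) = generate G (commutator_set G (lower_central G i) (carrier G))"

definition nilpotent_of_class :: "('a, 'b) monoid_scheme \<Rightarrow> nat \<Rightarrow> bool" where
  "nilpotent_of_class G k \<longleftrightarrow>
     group G \<and> lower_central G k = {\<one>\<^bsub>G\<^esub>} \<and> (\<forall>j < k. lower_central G j \<noteq> {\<one>\<^bsub>G\<^esub>})"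

definition m_large :: "('a, 'b) monoid_scheme \<Rightarrow> nat \<Rightarrow> 'a set \<Rightarrow> bool" where
  "m_large K m S \<longleftrightarrow>
     (\<forall>a. (\<forall>i < m. a i \<in> carrier K) \<longrightarrow> (\<Inter>i < m. l_coset K (a i) S) \<noteq> {})"

text \<open>Group words in variables x_0, x_1, ... and z_0, z_1, ... and their inverses:
  a list of letters (variable, exponent sign), True = positive, False = inverse.\<close>
datatype var = Xv nat | Zv nat

type_synonym word = "(var \<times> bool) list"

fun eval_var :: "(nat \<Rightarrow> 'a) \<Rightarrow> (nat \<Rightarrow> 'a) \<Rightarrow> var \<Rightarrow> 'a" where
  "eval_var h g (Xv i) = h i"
| "eval_var h g (Zv j) = g j"

fun eval_word :: "('a, 'b) monoid_scheme \<Rightarrow> (nat \<Rightarrow> 'a) \<Rightarrow> (nat \<Rightarrow> 'a) \<Rightarrow> word \<Rightarrow> 'a" where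
  "eval_word G h g [] = \<one>\<^bsub>G\<^esub>"
| "eval_word G h g ((v, s) # w) =
     (if s then eval_var h g v else inv\<^bsub>G\<^esub> (eval_var h g v)) \<otimes>\<^bsub>G\<^esub> eval_word G h g w"

definition word_vars_in :: "nat \<Rightarrow> nat \<Rightarrow> word \<Rightarrow> bool" where
  "word_vars_in n m w \<longleftrightarrow> (\<forall>(v, s) \<in> set w. (\<forall>i. v = Xv i \<longrightarrow> i < n) \<and> (\<forall>j. v = Zv j \<longrightarrow> j < m))"

abbreviation power_group :: "('a, 'b) monoid_scheme \<Rightarrow> nat \<Rightarrow> (nat \<Rightarrow> 'a) monoid" where
  "power_group G n \<equiv> product_group {..<n} (\<lambda>_. G)"

end

theory Submission
  imports Defs
begin


definition cm :: "('a, 'b) monoid_scheme \<Rightarrow> 'a \<Rightarrow> 'a \<Rightarrow> 'a" where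
  "cm G x y = inv\<^bsub>G\<^esub> x \<otimes>\<^bsub>G\<^esub> inv\<^bsub>G\<^esub> y \<otimes>\<^bsub>G\<^esub> x \<otimes>\<^bsub>G\<^esub> y"

context group
begin

lemma gc1: "x \<in> carrier G \<Longrightarrow> y \<in> carrier G \<Longrightarrow> inv x \<otimes> (x \<otimes> y) = y"
  by (simp add: m_assoc[symmetric])
lemma gc2: "x \<in> carrier G \<Longrightarrow> y \<in> carrier G \<Longrightarrow> x \<otimes> (inv x \<otimes> y) = y"
  by (simp add: m_assoc[symmetric])

lemmas gsimps = m_assoc inv_mult_group inv_inv gc1 gc2 l_inv r_inv l_one r_one inv_one cm_def

lemma cm_closed[simp]: "x \<in> carrier G \<Longrightarrow> y \<in> carrier G \<Longrightarrow> cm G x y \<in> carrier G"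
  by (simp add: cm_def)

lemma cm_inv: "x \<in> carrier G \<Longrightarrow> y \<in> carrier G \<Longrightarrow> inv (cm G x y) = cm G y x"
  by (simp add: gsimps)

lemma hall_witt:
  assumes "x \<in> carrier G" "y \<in> carrier G" "z \<in> carrier G"
  shows "(inv y \<otimes> cm G (cm G x (inv y)) z \<otimes> y) \<otimes> (inv z \<otimes> cm G (cm G y (inv z)) x \<otimes> z)
     \<otimes> (inv x \<otimes> cm G (cm G z (inv x)) y \<otimes> x) = \<one>"
  using assms by (simp add: gsimps)

lemma id_mult:
  assumes "f \<in> carrier G" "f' \<in> carrier G" "g \<in> carrier G" "g' \<in> carrier G"
  shows "inv (f \<otimes> g) \<otimes> (f' \<otimes> g') = (inv f \<otimes> f') \<otimes> cm G (inv f \<otimes> f') g \<otimes> (inv g \<otimes> g')"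
  using assms by (simp add: gsimps)

lemma id_comm:
  assumes "f \<in> carrier G" "f' \<in> carrier G" "g \<in> carrier G" "g' \<in> carrier G"
  shows "inv (cm G f g) \<otimes> cm G f' g' =
    cm G (cm G f g) (inv f \<otimes> f') \<otimes>
    (cm G f (inv g \<otimes> g') \<otimes> cm G (cm G f (inv g \<otimes> g')) (cm G f g) \<otimes> cm G (cm G f g) (inv g \<otimes> g')) \<otimes>
    cm G (cm G f (inv g \<otimes> g') \<otimes> cm G (cm G f (inv g \<otimes> g')) (cm G f g) \<otimes> cm G (cm G f g) (inv g \<otimes> g')) (inv f \<otimes> f') \<otimes>
    cm G (inv f \<otimes> f') g'"
  using assms by (simp add: gsimps)


lemma cs_mem: "a \<in> A \<Longrightarrow> b \<in> B \<Longrightarrow> inv a \<otimes> inv b \<otimes> a \<otimes> b \<in> commutator_set G A B"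
  unfolding commutator_set_def by blast

lemma cs_elim: "h \<in> commutator_set G A B \<Longrightarrow> (\<And>a b. a \<in> A \<Longrightarrow> b \<in> B \<Longrightarrow> h = inv a \<otimes> inv b \<otimes> a \<otimes> b \<Longrightarrow> P) \<Longrightarrow> P"
  unfolding commutator_set_def by blast

lemma lc_props: "subgroup (lower_central G i) G \<and>
   (\<forall>x\<in>lower_central G i. \<forall>g\<in>carrier G. inv g \<otimes> x \<otimes> g \<in> lower_central G i)"
proof (induction i)
  case 0
  then show ?case by (simp add: subgroup_self)
next
  case (Suc i)
  let ?H = "commutator_set G (lower_central G i) (carrier G)"
  have sub: "lower_central G i \<subseteq> carrier G" using Suc subgroup.subset by blast
  have Hc: "?H \<subseteq> carrier G" using sub by (auto elim!: cs_elim)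
  have "inv g \<otimes> x \<otimes> g \<in> generate G ?H" if "x \<in> generate G ?H" "g \<in> carrier G" for x g
    using that(1)
  proof (induction x rule: generate.induct)
    case one
    then show ?case using that(2) by (simp add: generate.one)
  next
    case (incl h)
    then obtain a b where ab: "a \<in> lower_central G i" "b \<in> carrier G" "h = inv a \<otimes> inv b \<otimes> a \<otimes> b"
      by (rule cs_elim) blast
    have ac: "a \<in> carrier G" using ab sub by auto
    have e: "inv g \<otimes> h \<otimes> g = inv (inv g \<otimes> a \<otimes> g) \<otimes> inv (inv g \<otimes> b \<otimes> g) \<otimes> (inv g \<otimes> a \<otimes> g) \<otimes> (inv g \<otimes> b \<otimes> g)"
      using ab ac that(2) by (simp add: gsimps)
    have "inv g \<otimes> a \<otimes> g \<in> lower_central G i" using Suc ab that(2) by blast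
    then have "inv g \<otimes> h \<otimes> g \<in> ?H" unfolding e using ab that(2) by (intro cs_mem) auto
    then show ?case by (rule generate.incl)
  next
    case (inv h)
    have hc: "h \<in> carrier G" using inv Hc by auto
    have e: "inv g \<otimes> inv h \<otimes> g = inv (inv g \<otimes> h \<otimes> g)" using hc that(2) by (simp add: gsimps)
    have "inv g \<otimes> h \<otimes> g \<in> ?H"
    proof -
      obtain a b where ab: "a \<in> lower_central G i" "b \<in> carrier G" "h = inv a \<otimes> inv b \<otimes> a \<otimes> b"
        using inv by (rule cs_elim) blast
      have ac: "a \<in> carrier G" using ab sub by auto
      have e: "inv g \<otimes> h \<otimes> g = inv (inv g \<otimes> a \<otimes> g) \<otimes> inv (inv g \<otimes> b \<otimes> g) \<otimes> (inv g \<otimes> a \<otimes> g) \<otimes> (inv g \<otimes> b \<otimes> g)"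
        using ab ac that(2) by (simp add: gsimps)
      have "inv g \<otimes> a \<otimes> g \<in> lower_central G i" using Suc ab that(2) by blast
      then show ?thesis unfolding e using ab that(2) by (intro cs_mem) auto
    qed
    then show ?case unfolding e by (rule generate.inv)
  next
    case (eng h1 h2)
    have c: "h1 \<in> carrier G" "h2 \<in> carrier G" using eng generate_in_carrier[OF Hc] by auto
    have e: "inv g \<otimes> (h1 \<otimes> h2) \<otimes> g = (inv g \<otimes> h1 \<otimes> g) \<otimes> (inv g \<otimes> h2 \<otimes> g)"
      using c that(2) by (simp add: gsimps)
    show ?case unfolding e using eng.IH by (rule generate.eng)
  qed
  then show ?case using generate_is_subgroup[OF Hc] by simp
qed

lemma lc_sub: "lower_central G i \<subseteq> carrier G"
  using lc_props subgroup.subset by blast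

lemma lc_subgroup: "subgroup (lower_central G i) G"
  using lc_props by blast

lemma lc_conj: "x \<in> lower_central G i \<Longrightarrow> g \<in> carrier G \<Longrightarrow> inv g \<otimes> x \<otimes> g \<in> lower_central G i"
  using lc_props by blast

lemma lc_cm1: "a \<in> lower_central G i \<Longrightarrow> b \<in> carrier G \<Longrightarrow> cm G a b \<in> lower_central G (Suc i)"
  unfolding cm_def lower_central.simps by (intro generate.incl cs_mem)

lemma lc_cm2: "a \<in> lower_central G i \<Longrightarrow> b \<in> carrier G \<Longrightarrow> cm G b a \<in> lower_central G (Suc i)"
proof -
  assume a: "a \<in> lower_central G i" "b \<in> carrier G"
  have "inv (cm G a b) \<in> lower_central G (Suc i)"
    using a unfolding cm_def lower_central.simps by (intro generate.inv cs_mem)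
  moreover have "a \<in> carrier G" using a(1) lc_sub by blast
  ultimately show ?thesis using cm_inv[of a b] a(2) by simp
qed

lemma lc_step: "lower_central G (Suc i) \<subseteq> lower_central G i"
proof -
  have "commutator_set G (lower_central G i) (carrier G) \<subseteq> lower_central G i"
  proof
    fix h assume "h \<in> commutator_set G (lower_central G i) (carrier G)"
    then obtain a b where ab: "a \<in> lower_central G i" "b \<in> carrier G" "h = inv a \<otimes> inv b \<otimes> a \<otimes> b"
      by (rule cs_elim) blast
    have ac: "a \<in> carrier G" using ab lc_sub by auto
    have e: "h = inv a \<otimes> (inv b \<otimes> a \<otimes> b)" using ab ac by (simp add: gsimps)
    show "h \<in> lower_central G i" unfolding e
      using ab lc_conj lc_subgroup subgroup.m_closed subgroup.m_inv_closed by metis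
  qed
  then show ?thesis using generate_subgroup_incl lc_subgroup by simp
qed

lemma lc_anti: "j \<le> i \<Longrightarrow> lower_central G i \<subseteq> lower_central G j"
proof (induction i)
  case 0 then show ?case by simp
next
  case (Suc i)
  then show ?case using lc_step by (metis le_Suc_eq order.refl order_trans)
qed

declare lower_central.simps(2)[simp del]

lemma three_sub: "a \<in> lower_central G i \<Longrightarrow> b \<in> lower_central G j \<Longrightarrow> cm G a b \<in> lower_central G (Suc (i + j))"
proof (induction j arbitrary: i a b)
  case 0
  then show ?case using lc_cm1 by simp
next
  case (Suc j)
  let ?N = "lower_central G (Suc (i + Suc j))"
  let ?H = "commutator_set G (lower_central G j) (carrier G)"
  have Hc: "?H \<subseteq> carrier G"
  proof
    fix h assume "h \<in> ?H"
    then obtain x y where "x \<in> lower_central G j" "y \<in> carrier G" "h = inv x \<otimes> inv y \<otimes> x \<otimes> y"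
      by (rule cs_elim) blast
    then show "h \<in> carrier G" using subsetD[OF lc_sub] by auto
  qed
  have ac: "a \<in> carrier G" using subsetD[OF lc_sub Suc(2)] .
  have Nsub: "subgroup ?N G" by (rule lc_subgroup)
  have gen: "cm G a h \<in> ?N" if hH: "h \<in> ?H" for h
  proof -
    obtain x y where xy: "x \<in> lower_central G j" "y \<in> carrier G" "h = inv x \<otimes> inv y \<otimes> x \<otimes> y"
      using hH by (rule cs_elim) blast
    have xc: "x \<in> carrier G" using subsetD[OF lc_sub xy(1)] .
    have yi: "inv y \<in> carrier G" using xy(2) by simp
    have ai: "inv a \<in> lower_central G i" using subgroup.m_inv_closed[OF lc_subgroup Suc(2)] .
    have xi: "inv x \<in> lower_central G j" using subgroup.m_inv_closed[OF lc_subgroup xy(1)] .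
    have t2: "cm G (cm G (inv y) (inv a)) x \<in> ?N"
      using Suc.IH[OF lc_cm2[OF ai yi] xy(1)] by simp
    have t3: "cm G (cm G a (inv x)) (inv y) \<in> ?N"
      using lc_cm1[OF Suc.IH[OF Suc(2) xi] yi] by simp
    have cy: "cm G x y \<in> carrier G" using xc xy(2) by (rule cm_closed)
    define T1 where "T1 = inv (inv y) \<otimes> cm G (cm G x (inv (inv y))) a \<otimes> inv y"
    define T2 where "T2 = inv a \<otimes> cm G (cm G (inv y) (inv a)) x \<otimes> a"
    define T3 where "T3 = inv x \<otimes> cm G (cm G a (inv x)) (inv y) \<otimes> x"
    have T2N: "T2 \<in> ?N" unfolding T2_def using lc_conj[OF t2 ac] .
    have T3N: "T3 \<in> ?N" unfolding T3_def using lc_conj[OF t3 xc] .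
    have T1c: "T1 \<in> carrier G" unfolding T1_def using xy(2) xc ac by simp
    have T23c: "T2 \<in> carrier G" "T3 \<in> carrier G" using subsetD[OF lc_sub T2N] subsetD[OF lc_sub T3N] by auto
    have hw: "T1 \<otimes> T2 \<otimes> T3 = \<one>" unfolding T1_def T2_def T3_def
      by (rule hall_witt[OF xc yi ac])
    have "T1 \<otimes> (T2 \<otimes> T3) = \<one>" using hw m_assoc[OF T1c T23c] by simp
    from inv_equality[OF this m_closed[OF T23c] T1c] have "inv (T2 \<otimes> T3) = T1" .
    then have T1N: "T1 \<in> ?N"
      using subgroup.m_inv_closed[OF Nsub subgroup.m_closed[OF Nsub T2N T3N]] by (simp only:)
    have Weq: "inv y \<otimes> T1 \<otimes> y = cm G (cm G x y) a"
      unfolding T1_def using xy(2) xc ac by (simp add: gsimps)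
    have W1: "cm G (cm G x y) a \<in> ?N" using lc_conj[OF T1N xy(2)] unfolding Weq .
    have W2: "inv (cm G (cm G x y) a) \<in> ?N" by (rule subgroup.m_inv_closed[OF Nsub W1])
    have W3: "inv (cm G (cm G x y) a) = cm G a (cm G x y)" by (rule cm_inv[OF cy ac])
    have W4: "cm G x y = h" unfolding cm_def xy(3) by (rule refl)
    have W5: "cm G a (cm G x y) \<in> ?N" using W2 unfolding W3 .
    show ?thesis using W5 unfolding W4 .
  qed
  have "cm G a b \<in> ?N" if "b \<in> generate G ?H" for b
    using that
  proof (induction b rule: generate.induct)
    case one
    have "cm G a \<one> = \<one>" using ac by (simp add: gsimps)
    then show ?case using subgroup.one_closed[OF Nsub] by (simp only:)
  next
    case (incl h)
    then show ?case by (rule gen)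
  next
    case (inv h)
    have hc: "h \<in> carrier G" using subsetD[OF Hc inv] .
    have e: "inv (inv h) \<otimes> inv (cm G a h) \<otimes> inv h = cm G a (inv h)"
      using hc ac by (simp add: gsimps)
    have "inv (cm G a h) \<in> ?N" using subgroup.m_inv_closed[OF Nsub gen[OF inv]] .
    from lc_conj[OF this inv_closed[OF hc]] show ?case unfolding e .
  next
    case (eng h1 h2)
    have c: "h1 \<in> carrier G" "h2 \<in> carrier G"
      using generate_in_carrier[OF Hc eng.hyps(1)] generate_in_carrier[OF Hc eng.hyps(2)] by auto
    have e: "cm G a h2 \<otimes> (inv h2 \<otimes> cm G a h1 \<otimes> h2) = cm G a (h1 \<otimes> h2)"
      using c ac by (simp add: gsimps)
    have "inv h2 \<otimes> cm G a h1 \<otimes> h2 \<in> ?N" using lc_conj[OF eng.IH(1) c(2)] .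
    from subgroup.m_closed[OF Nsub eng.IH(2) this] show ?case unfolding e .
  qed
  then show ?case using Suc(3) by (simp add: lower_central.simps(2))
qed

end


definition Dd :: "('a, 'b) monoid_scheme \<Rightarrow> ('c, 'd) monoid_scheme \<Rightarrow> 'c \<Rightarrow> ('c \<Rightarrow> 'a) \<Rightarrow> 'c \<Rightarrow> 'a" where
  "Dd G K a f = (\<lambda>h. inv\<^bsub>G\<^esub> (f h) \<otimes>\<^bsub>G\<^esub> f (a \<otimes>\<^bsub>K\<^esub> h))"

fun Dl :: "('a, 'b) monoid_scheme \<Rightarrow> ('c, 'd) monoid_scheme \<Rightarrow> 'c list \<Rightarrow> ('c \<Rightarrow> 'a) \<Rightarrow> 'c \<Rightarrow> 'a" where
  "Dl G K [] f = f"
| "Dl G K (a # as) f = Dl G K as (Dd G K a f)"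

fun Pol :: "('a, 'b) monoid_scheme \<Rightarrow> ('c, 'd) monoid_scheme \<Rightarrow> (nat \<Rightarrow> 'a set) \<Rightarrow> nat \<Rightarrow> nat \<Rightarrow> ('c \<Rightarrow> 'a) \<Rightarrow> bool" where
  "Pol G K \<Gamma> 0 i f = (\<forall>h\<in>carrier K. f h \<in> \<Gamma> i)"
| "Pol G K \<Gamma> (Suc s) i f = ((\<forall>h\<in>carrier K. f h \<in> \<Gamma> i) \<and> (\<forall>a\<in>carrier K. Pol G K \<Gamma> s (Suc i) (Dd G K a f)))"

locale filt = G: group G + K: group K
  for G :: "('a, 'b) monoid_scheme" and K :: "('c, 'd) monoid_scheme" +
  fixes \<Gamma> :: "nat \<Rightarrow> 'a set"
  assumes Gsub: "\<Gamma> i \<subseteq> carrier G"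
    and Gone: "\<one>\<^bsub>G\<^esub> \<in> \<Gamma> i"
    and Gmult: "x \<in> \<Gamma> i \<Longrightarrow> y \<in> \<Gamma> i \<Longrightarrow> x \<otimes>\<^bsub>G\<^esub> y \<in> \<Gamma> i"
    and Ganti: "j \<le> i \<Longrightarrow> \<Gamma> i \<subseteq> \<Gamma> j"
    and Gcomm: "x \<in> \<Gamma> i \<Longrightarrow> y \<in> \<Gamma> j \<Longrightarrow> cm G x y \<in> \<Gamma> (i + j)"
    and G0: "\<Gamma> 0 = carrier G"
    and G1: "\<Gamma> 1 = carrier G"
begin

abbreviation "P \<equiv> Pol G K \<Gamma>"
abbreviation "D \<equiv> Dd G K"

lemma P_vals: "P s i f \<Longrightarrow> h \<in> carrier K \<Longrightarrow> f h \<in> \<Gamma> i"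
  by (cases s) auto

lemma P_car: "P s i f \<Longrightarrow> h \<in> carrier K \<Longrightarrow> f h \<in> carrier G"
  using P_vals Gsub by blast

lemma P_cong: "P s i f \<Longrightarrow> (\<And>h. h \<in> carrier K \<Longrightarrow> f h = g h) \<Longrightarrow> P s i g"
proof (induction s arbitrary: i f g)
  case 0 then show ?case by auto
next
  case (Suc s)
  have "P s (Suc i) (D a g)" if a: "a \<in> carrier K" for a
  proof -
    have "P s (Suc i) (D a f)" using Suc.prems a by auto
    moreover have "D a f h = D a g h" if "h \<in> carrier K" for h
      using Suc.prems(2) that a by (simp add: Dd_def)
    ultimately show ?thesis using Suc.IH by blast
  qed
  then show ?case using Suc.prems by auto
qed

lemma P_mono: "P s i f \<Longrightarrow> j \<le> i \<Longrightarrow> P s j f"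
proof (induction s arbitrary: i j f)
  case 0 then show ?case using Ganti by auto
next
  case (Suc s)
  have "\<forall>h\<in>carrier K. f h \<in> \<Gamma> j" using Suc.prems(1) Ganti[OF Suc.prems(2)] by auto
  moreover have "\<forall>a\<in>carrier K. P s (Suc j) (D a f)"
    using Suc.prems(1) Suc.IH[of "Suc i" _ "Suc j"] Suc.prems(2) by auto
  ultimately show ?case by simp
qed

lemma P_down: "P (Suc s) i f \<Longrightarrow> P s i f"
proof (induction s arbitrary: i f)
  case 0 then show ?case by simp
next
  case (Suc s)
  then show ?case by (metis Pol.simps(2))
qed

lemma P_const: "c \<in> \<Gamma> i \<Longrightarrow> P s i (\<lambda>_. c)"
proof (induction s arbitrary: i c)
  case 0 then show ?case by simp
next
  case (Suc s)
  have cc: "c \<in> carrier G" using Suc.prems Gsub by auto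
  have "P s (Suc i) (D a (\<lambda>_. c))" for a
  proof -
    have "P s (Suc i) (\<lambda>_. \<one>\<^bsub>G\<^esub>)" using Suc.IH Gone by blast
    then show ?thesis by (rule P_cong) (simp add: Dd_def cc)
  qed
  then show ?case using Suc.prems by simp
qed

lemma P_trans: "P s i f \<Longrightarrow> b \<in> carrier K \<Longrightarrow> P s i (\<lambda>h. f (b \<otimes>\<^bsub>K\<^esub> h))"
proof (induction s arbitrary: i f b)
  case 0 then show ?case by simp
next
  case (Suc s)
  have "P s (Suc i) (D a (\<lambda>h. f (b \<otimes>\<^bsub>K\<^esub> h)))" if a: "a \<in> carrier K" for a
  proof -
    let ?a = "b \<otimes>\<^bsub>K\<^esub> a \<otimes>\<^bsub>K\<^esub> inv\<^bsub>K\<^esub> b"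
    have ac: "?a \<in> carrier K" using a Suc.prems by simp
    have "P s (Suc i) (D ?a f)" using Suc.prems ac by simp
    then have "P s (Suc i) (\<lambda>h. D ?a f (b \<otimes>\<^bsub>K\<^esub> h))" using Suc.IH Suc.prems by blast
    then show ?thesis
    proof (rule P_cong)
      fix h assume h: "h \<in> carrier K"
      have "?a \<otimes>\<^bsub>K\<^esub> (b \<otimes>\<^bsub>K\<^esub> h) = b \<otimes>\<^bsub>K\<^esub> (a \<otimes>\<^bsub>K\<^esub> h)"
        using h a Suc.prems by (simp add: K.m_assoc K.gc1)
      then show "D ?a f (b \<otimes>\<^bsub>K\<^esub> h) = D a (\<lambda>h. f (b \<otimes>\<^bsub>K\<^esub> h)) h"
        by (simp add: Dd_def)
    qed
  qed
  then show ?case using Suc.prems by auto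
qed

lemma P_main: "(\<forall>i f g. P s i f \<longrightarrow> P s i g \<longrightarrow> P s i (\<lambda>h. f h \<otimes>\<^bsub>G\<^esub> g h)) \<and>
  (\<forall>i j f g. P s i f \<longrightarrow> P s j g \<longrightarrow> P s (i + j) (\<lambda>h. cm G (f h) (g h)))"
proof (induction s)
  case 0
  then show ?case using Gmult Gcomm by auto
next
  case (Suc s)
  have M: "P s i f \<Longrightarrow> P s i g \<Longrightarrow> P s i (\<lambda>h. f h \<otimes>\<^bsub>G\<^esub> g h)" for i f g using Suc.IH by blast
  have C: "P s i f \<Longrightarrow> P s j g \<Longrightarrow> P s (i + j) (\<lambda>h. cm G (f h) (g h))" for i j f g using Suc.IH by blast
  have C': "P s i f \<Longrightarrow> P s j g \<Longrightarrow> l \<le> i + j \<Longrightarrow> P s l (\<lambda>h. cm G (f h) (g h))" for i j l f g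
    using C P_mono by blast
  have MM: "P (Suc s) i (\<lambda>h. f h \<otimes>\<^bsub>G\<^esub> g h)" if f: "P (Suc s) i f" and g: "P (Suc s) i g" for i f g
  proof -
    have "P s (Suc i) (D a (\<lambda>h. f h \<otimes>\<^bsub>G\<^esub> g h))" if a: "a \<in> carrier K" for a
    proof -
      have Df: "P s (Suc i) (D a f)" and Dg: "P s (Suc i) (D a g)" using f g a by auto
      have g0: "P s i g" using g P_down by blast
      have "P s (Suc i) (\<lambda>h. D a f h \<otimes>\<^bsub>G\<^esub> cm G (D a f h) (g h) \<otimes>\<^bsub>G\<^esub> D a g h)"
        using M[OF M[OF Df C'[OF Df g0]] Dg] by simp
      then show ?thesis
      proof (rule P_cong)
        fix h assume h: "h \<in> carrier K"
        have ah: "a \<otimes>\<^bsub>K\<^esub> h \<in> carrier K" using a h by simp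
        have c: "f h \<in> carrier G" "g h \<in> carrier G" "f (a \<otimes>\<^bsub>K\<^esub> h) \<in> carrier G" "g (a \<otimes>\<^bsub>K\<^esub> h) \<in> carrier G"
          using P_car[OF f h] P_car[OF g h] P_car[OF f ah] P_car[OF g ah] by auto
        show "D a f h \<otimes>\<^bsub>G\<^esub> cm G (D a f h) (g h) \<otimes>\<^bsub>G\<^esub> D a g h = D a (\<lambda>h. f h \<otimes>\<^bsub>G\<^esub> g h) h"
          unfolding Dd_def using G.id_mult[OF c(1,3,2,4)] by simp
      qed
    qed
    moreover have "\<forall>h\<in>carrier K. f h \<otimes>\<^bsub>G\<^esub> g h \<in> \<Gamma> i" using f g Gmult by auto
    ultimately show ?thesis by simp
  qed
  have CC: "P (Suc s) (i + j) (\<lambda>h. cm G (f h) (g h))" if f: "P (Suc s) i f" and g: "P (Suc s) j g" for i j f g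
  proof -
    have "P s (Suc (i + j)) (D a (\<lambda>h. cm G (f h) (g h)))" if a: "a \<in> carrier K" for a
    proof -
      have Df: "P s (Suc i) (D a f)" and Dg: "P s (Suc j) (D a g)" using f g a by auto
      have f0: "P s i f" and g0: "P s j g" using f g P_down by blast+
      have ga: "P s j (\<lambda>h. g (a \<otimes>\<^bsub>K\<^esub> h))" using P_trans[OF g0 a] .
      have c: "P s (i + j) (\<lambda>h. cm G (f h) (g h))" using C[OF f0 g0] .
      have t1: "P s (Suc (i + j)) (\<lambda>h. cm G (cm G (f h) (g h)) (D a f h))" using C'[OF c Df] by simp
      have t2: "P s (Suc (i + j)) (\<lambda>h. cm G (f h) (D a g h))" using C[OF f0 Dg] by simp
      have t3: "P s (Suc (i + j)) (\<lambda>h. cm G (cm G (f h) (D a g h)) (cm G (f h) (g h)))" using C'[OF t2 c] by simp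
      have t4: "P s (Suc (i + j)) (\<lambda>h. cm G (cm G (f h) (g h)) (D a g h))" using C'[OF c Dg] by simp
      define A where "A = (\<lambda>h. cm G (f h) (D a g h) \<otimes>\<^bsub>G\<^esub> cm G (cm G (f h) (D a g h)) (cm G (f h) (g h))
          \<otimes>\<^bsub>G\<^esub> cm G (cm G (f h) (g h)) (D a g h))"
      have tA: "P s (Suc (i + j)) A" unfolding A_def using M[OF M[OF t2 t3] t4] by simp
      have t5: "P s (Suc (i + j)) (\<lambda>h. cm G (A h) (D a f h))" using C'[OF tA Df] by simp
      have t6: "P s (Suc (i + j)) (\<lambda>h. cm G (D a f h) (g (a \<otimes>\<^bsub>K\<^esub> h)))" using C[OF Df ga] by simp
      have "P s (Suc (i + j)) (\<lambda>h. cm G (cm G (f h) (g h)) (D a f h) \<otimes>\<^bsub>G\<^esub> A h \<otimes>\<^bsub>G\<^esub> cm G (A h) (D a f h)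
           \<otimes>\<^bsub>G\<^esub> cm G (D a f h) (g (a \<otimes>\<^bsub>K\<^esub> h)))"
        using M[OF M[OF M[OF t1 tA] t5] t6] by simp
      then show ?thesis
      proof (rule P_cong)
        fix h assume h: "h \<in> carrier K"
        have ah: "a \<otimes>\<^bsub>K\<^esub> h \<in> carrier K" using a h by simp
        have c: "f h \<in> carrier G" "g h \<in> carrier G" "f (a \<otimes>\<^bsub>K\<^esub> h) \<in> carrier G" "g (a \<otimes>\<^bsub>K\<^esub> h) \<in> carrier G"
          using P_car[OF f h] P_car[OF g h] P_car[OF f ah] P_car[OF g ah] by auto
        show "cm G (cm G (f h) (g h)) (D a f h) \<otimes>\<^bsub>G\<^esub> A h \<otimes>\<^bsub>G\<^esub> cm G (A h) (D a f h)
           \<otimes>\<^bsub>G\<^esub> cm G (D a f h) (g (a \<otimes>\<^bsub>K\<^esub> h)) = D a (\<lambda>h. cm G (f h) (g h)) h"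
          unfolding Dd_def A_def using G.id_comm[OF c(1,3,2,4)] by simp
      qed
    qed
    moreover have "\<forall>h\<in>carrier K. cm G (f h) (g h) \<in> \<Gamma> (i + j)" using f g Gcomm P_vals by blast
    ultimately show ?thesis by simp
  qed
  show ?case using MM CC by blast
qed

lemma P_mult: "P s i f \<Longrightarrow> P s i g \<Longrightarrow> P s i (\<lambda>h. f h \<otimes>\<^bsub>G\<^esub> g h)"
  using P_main by blast

lemma P_cm: "P s i f \<Longrightarrow> P s j g \<Longrightarrow> P s (i + j) (\<lambda>h. cm G (f h) (g h))"
  using P_main by blast

lemma P_hom: "\<pi> \<in> hom K G \<Longrightarrow> P s 0 \<pi>"
proof (induction s)
  case 0 then show ?case using G0 by (auto simp: hom_def)
next
  case (Suc s)
  have "P s 1 (D a \<pi>)" if a: "a \<in> carrier K" for a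
  proof -
    have pa: "\<pi> a \<in> carrier G" using a Suc.prems by (auto simp: hom_def)
    have "P s 1 (\<lambda>h. \<pi> a \<otimes>\<^bsub>G\<^esub> cm G (\<pi> a) (\<pi> h))"
      using P_mult[OF P_const P_cm[OF P_const Suc.IH[OF Suc.prems]]] pa G1 by simp
    then show ?thesis
    proof (rule P_cong)
      fix h assume h: "h \<in> carrier K"
      have ph: "\<pi> h \<in> carrier G" and e: "\<pi> (a \<otimes>\<^bsub>K\<^esub> h) = \<pi> a \<otimes>\<^bsub>G\<^esub> \<pi> h"
        using h a Suc.prems by (auto simp: hom_def)
      show "\<pi> a \<otimes>\<^bsub>G\<^esub> cm G (\<pi> a) (\<pi> h) = D a \<pi> h"
        unfolding Dd_def e using pa ph by (simp add: G.gsimps)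
    qed
  qed
  then show ?case using Suc.prems G0 by (auto simp: hom_def)
qed

lemma P_hom_inv: assumes hom: "\<pi> \<in> hom K G" shows "P s 0 (\<lambda>h. inv\<^bsub>G\<^esub> (\<pi> h))"
proof (cases s)
  case 0 then show ?thesis using G0 hom by (auto simp: hom_def)
next
  case (Suc s')
  have "P s' 1 (D a (\<lambda>h. inv\<^bsub>G\<^esub> (\<pi> h)))" if a: "a \<in> carrier K" for a
  proof -
    have pa: "\<pi> a \<in> carrier G" using a hom by (auto simp: hom_def)
    have "P s' 1 (\<lambda>h. inv\<^bsub>G\<^esub> (\<pi> a))" using P_const G1 pa by simp
    then show ?thesis
    proof (rule P_cong)
      fix h assume h: "h \<in> carrier K"
      have ph: "\<pi> h \<in> carrier G" and e: "\<pi> (a \<otimes>\<^bsub>K\<^esub> h) = \<pi> a \<otimes>\<^bsub>G\<^esub> \<pi> h"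
        using h a hom by (auto simp: hom_def)
      show "inv\<^bsub>G\<^esub> (\<pi> a) = D a (\<lambda>h. inv\<^bsub>G\<^esub> (\<pi> h)) h"
        unfolding Dd_def e using pa ph by (simp add: G.gsimps)
    qed
  qed
  then show ?thesis using Suc hom G0 by (auto simp: hom_def)
qed

lemma P_Dl: "P s i f \<Longrightarrow> length as = s \<Longrightarrow> set as \<subseteq> carrier K \<Longrightarrow> h \<in> carrier K \<Longrightarrow> Dl G K as f h \<in> \<Gamma> (i + s)"
proof (induction as arbitrary: s i f)
  case Nil then show ?case using P_vals by auto
next
  case (Cons a as)
  then obtain s' where s: "s = Suc s'" by auto
  have "P s' (Suc i) (D a f)" using Cons.prems s by auto
  from Cons.IH[OF this] Cons.prems s show ?case by simp
qed

end


lemma large_nonempty: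
  assumes K: "group K" and m: "0 < m" and L: "m_large K m S"
  shows "\<exists>x. x \<in> S"
proof -
  have o: "\<one>\<^bsub>K\<^esub> \<in> carrier K" using K by (simp add: group.is_monoid monoid.one_closed)
  have "(\<Inter>i<m. l_coset K ((\<lambda>_. \<one>\<^bsub>K\<^esub>) i) S) \<noteq> {}"
    using L[unfolded m_large_def, rule_format, of "\<lambda>_. \<one>\<^bsub>K\<^esub>"] o by blast
  then obtain y where "y \<in> (\<Inter>i<m. l_coset K \<one>\<^bsub>K\<^esub> S)" by auto
  moreover have "0 \<in> {..<m}" using m by simp
  ultimately have "y \<in> l_coset K \<one>\<^bsub>K\<^esub> S" by blast
  then show ?thesis unfolding l_coset_def by auto
qed

lemma D_zero_const:
  assumes G: "group G" and K: "group K"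
    and Z: "\<forall>a\<in>carrier K. \<forall>h\<in>carrier K. Dd G K a f h = \<one>\<^bsub>G\<^esub>"
    and V: "\<forall>h\<in>carrier K. f h \<in> carrier G"
    and x: "x \<in> carrier K" and y: "y \<in> carrier K"
  shows "f x = f y"
proof -
  interpret G: group G by (rule G)
  interpret K: group K by (rule K)
  let ?a = "x \<otimes>\<^bsub>K\<^esub> inv\<^bsub>K\<^esub> y"
  have a: "?a \<in> carrier K" using x y by simp
  have e: "?a \<otimes>\<^bsub>K\<^esub> y = x" using x y by (simp add: K.m_assoc)
  have "inv\<^bsub>G\<^esub> (f y) \<otimes>\<^bsub>G\<^esub> f x = \<one>\<^bsub>G\<^esub>" using Z a y e unfolding Dd_def by force
  then have "f y \<otimes>\<^bsub>G\<^esub> (inv\<^bsub>G\<^esub> (f y) \<otimes>\<^bsub>G\<^esub> f x) = f y" using V y by simp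
  then show ?thesis using V x y G.gc2 by simp
qed

lemma comb:
  assumes G: "group G" and K: "group K"
  shows "\<And>f c. (\<forall>as. length as = Suc t \<longrightarrow> set as \<subseteq> carrier K \<longrightarrow> (\<forall>h\<in>carrier K. Dl G K as f h = \<one>\<^bsub>G\<^esub>))
    \<Longrightarrow> (\<forall>h\<in>carrier K. f h \<in> carrier G) \<Longrightarrow> c \<in> carrier G
    \<Longrightarrow> m_large K (2 ^ t) {h \<in> carrier K. f h = c} \<Longrightarrow> \<forall>h\<in>carrier K. f h = c"
proof (induction t)
  case 0
  have Z: "\<forall>a\<in>carrier K. \<forall>h\<in>carrier K. Dd G K a f h = \<one>\<^bsub>G\<^esub>"
  proof (intro ballI)
    fix a h assume a: "a \<in> carrier K" and h: "h \<in> carrier K"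
    have l: "length [a] = Suc 0" by simp
    have s: "set [a] \<subseteq> carrier K" using a by simp
    have "Dl G K [a] f h = \<one>\<^bsub>G\<^esub>" using "0.prems"(1)[rule_format, OF l s h] .
    then show "Dd G K a f h = \<one>\<^bsub>G\<^esub>" by simp
  qed
  have pos: "0 < (2::nat) ^ 0" by simp
  obtain x where x: "x \<in> {h \<in> carrier K. f h = c}" using large_nonempty[OF K pos "0.prems"(4)] by blast
  show ?case
  proof
    fix h assume h: "h \<in> carrier K"
    have "f h = f x" using D_zero_const[OF G K Z "0.prems"(2) h] x by blast
    then show "f h = c" using x by simp
  qed
next
  case (Suc t)
  interpret G: group G by (rule G)
  interpret K: group K by (rule K)
  let ?X = "{h \<in> carrier K. f h = c}"
  have Z: "\<forall>a\<in>carrier K. \<forall>h\<in>carrier K. Dd G K a f h = \<one>\<^bsub>G\<^esub>"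
  proof
    fix a assume a: "a \<in> carrier K"
    let ?Xa = "{h \<in> carrier K. Dd G K a f h = \<one>\<^bsub>G\<^esub>}"
    have L: "m_large K (2 ^ t) ?Xa"
      unfolding m_large_def
    proof (intro allI impI)
      fix b :: "nat \<Rightarrow> 'c" assume b: "\<forall>i<2 ^ t. b i \<in> carrier K"
      define b' where "b' i = (if i < 2 ^ t then b i else b (i - 2 ^ t) \<otimes>\<^bsub>K\<^esub> inv\<^bsub>K\<^esub> a)" for i :: nat
      have b': "\<forall>i<2 ^ Suc t. b' i \<in> carrier K"
      proof (intro allI impI)
        fix i :: nat assume i: "i < 2 ^ Suc t"
        show "b' i \<in> carrier K"
        proof (cases "i < 2 ^ t")
          case True
          then show ?thesis using b unfolding b'_def by simp
        next
          case False
          then have "i - 2 ^ t < 2 ^ t" using i by simp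
          then have "b (i - 2 ^ t) \<in> carrier K" using b by blast
          then show ?thesis using False a unfolding b'_def by simp
        qed
      qed
      have ne: "(\<Inter>i<2 ^ Suc t. l_coset K (b' i) ?X) \<noteq> {}"
        using Suc.prems(4)[unfolded m_large_def, rule_format, of b'] b' by blast
      then obtain y where y: "y \<in> (\<Inter>i<2 ^ Suc t. l_coset K (b' i) ?X)" by blast
      have "y \<in> l_coset K (b i) ?Xa" if i: "i < 2 ^ t" for i
      proof -
        have bi: "b i \<in> carrier K" using b i by blast
        have i1: "i \<in> {..<2 ^ Suc t}" using i by simp
        have i2: "i + 2 ^ t \<in> {..<2 ^ Suc t}" using i by simp
        have "y \<in> l_coset K (b' i) ?X" using INT_D[OF y i1] .
        moreover have "b' i = b i" using i unfolding b'_def by simp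
        ultimately have "y \<in> l_coset K (b i) ?X" by simp
        then obtain x where x: "x \<in> ?X" and yx: "y = b i \<otimes>\<^bsub>K\<^esub> x" unfolding l_coset_def by blast
        have "y \<in> l_coset K (b' (i + 2 ^ t)) ?X" using INT_D[OF y i2] .
        moreover have "b' (i + 2 ^ t) = b i \<otimes>\<^bsub>K\<^esub> inv\<^bsub>K\<^esub> a" unfolding b'_def by simp
        ultimately have "y \<in> l_coset K (b i \<otimes>\<^bsub>K\<^esub> inv\<^bsub>K\<^esub> a) ?X" by simp
        then obtain x' where x': "x' \<in> ?X" and yx': "y = b i \<otimes>\<^bsub>K\<^esub> inv\<^bsub>K\<^esub> a \<otimes>\<^bsub>K\<^esub> x'"
          unfolding l_coset_def by blast
        have xc: "x \<in> carrier K" "x' \<in> carrier K" using x x' by auto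
        have "b i \<otimes>\<^bsub>K\<^esub> x = b i \<otimes>\<^bsub>K\<^esub> inv\<^bsub>K\<^esub> a \<otimes>\<^bsub>K\<^esub> x'"
          using yx yx' by (simp only:)
        also have "\<dots> = b i \<otimes>\<^bsub>K\<^esub> (inv\<^bsub>K\<^esub> a \<otimes>\<^bsub>K\<^esub> x')"
          using xc a bi by (simp add: K.m_assoc)
        finally have "b i \<otimes>\<^bsub>K\<^esub> x = b i \<otimes>\<^bsub>K\<^esub> (inv\<^bsub>K\<^esub> a \<otimes>\<^bsub>K\<^esub> x')" .
        from K.l_cancel[OF this xc(1) K.m_closed[OF K.inv_closed[OF a] xc(2)] bi]
        have xeq: "x = inv\<^bsub>K\<^esub> a \<otimes>\<^bsub>K\<^esub> x'" .
        have ax: "a \<otimes>\<^bsub>K\<^esub> x = x'" using K.gc2[OF a xc(2)] xeq by (simp only:)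
        have fx: "f x = c" "f x' = c" using x x' by auto
        have "Dd G K a f x = \<one>\<^bsub>G\<^esub>" unfolding Dd_def ax fx by (rule G.l_inv[OF Suc.prems(3)])
        then have "x \<in> ?Xa" using xc by blast
        then show ?thesis unfolding l_coset_def yx by blast
      qed
      then show "(\<Inter>i<2 ^ t. l_coset K (b i) ?Xa) \<noteq> {}" by blast
    qed
    have D: "\<forall>as. length as = Suc t \<longrightarrow> set as \<subseteq> carrier K \<longrightarrow> (\<forall>h\<in>carrier K. Dl G K as (Dd G K a f) h = \<one>\<^bsub>G\<^esub>)"
    proof (intro allI impI)
      fix as :: "'c list" assume "length as = Suc t" "set as \<subseteq> carrier K"
      then have l: "length (a # as) = Suc (Suc t)" and ss: "set (a # as) \<subseteq> carrier K" using a by auto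
      show "\<forall>h\<in>carrier K. Dl G K as (Dd G K a f) h = \<one>\<^bsub>G\<^esub>"
        using Suc.prems(1)[rule_format, OF l ss] by simp
    qed
    have V: "\<forall>h\<in>carrier K. Dd G K a f h \<in> carrier G" using Suc.prems(2) a unfolding Dd_def by simp
    show "\<forall>h\<in>carrier K. Dd G K a f h = \<one>\<^bsub>G\<^esub>" using Suc.IH[OF D V G.one_closed L] .
  qed
  have pos: "0 < (2::nat) ^ Suc t" by simp
  obtain x where x: "x \<in> ?X" using large_nonempty[OF K pos Suc.prems(4)] by blast
  show ?case
  proof
    fix h assume h: "h \<in> carrier K"
    have "f h = f x" using D_zero_const[OF G K Z Suc.prems(2) h] x by blast
    then show "f h = c" using x by simp
  qed
qed



definition Gam :: "('a, 'b) monoid_scheme \<Rightarrow> nat \<Rightarrow> 'a set" where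
  "Gam G s = (if s = 0 then carrier G else lower_central G (s - 1))"

lemma Gam_filt:
  assumes G: "group G" and K: "group K"
  shows "filt G K (Gam G)"
proof -
  interpret G: group G by (rule G)
  interpret K: group K by (rule K)
  have sub: "Gam G i \<subseteq> carrier G" for i unfolding Gam_def using G.lc_sub by simp
  have sg: "subgroup (Gam G i) G" for i unfolding Gam_def using G.lc_subgroup G.subgroup_self by simp
  have anti: "Gam G i \<subseteq> Gam G j" if "j \<le> i" for i j
    unfolding Gam_def using that G.lc_anti[of "j - 1" "i - 1"] G.lc_sub[of "i - 1"] by auto
  have comm: "cm G x y \<in> Gam G (i + j)" if x: "x \<in> Gam G i" and y: "y \<in> Gam G j" for x y i j
  proof -
    have xc: "x \<in> carrier G" and yc: "y \<in> carrier G" using x y sub by auto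
    show ?thesis
    proof (cases "i = 0")
      case i: True
      show ?thesis
      proof (cases "j = 0")
        case True then show ?thesis using i xc yc unfolding Gam_def by simp
      next
        case False
        then have yl: "y \<in> lower_central G (j - 1)" using y unfolding Gam_def by simp
        have "cm G y x \<in> lower_central G (j - 1)"
          using G.lc_cm1[OF yl xc] G.lc_step by blast
        then have "inv\<^bsub>G\<^esub> (cm G y x) \<in> lower_central G (j - 1)"
          using subgroup.m_inv_closed[OF G.lc_subgroup] by blast
        then show ?thesis using G.cm_inv[OF yc xc] i False unfolding Gam_def by simp
      qed
    next
      case i: False
      then have xl: "x \<in> lower_central G (i - 1)" using x unfolding Gam_def by simp
      show ?thesis
      proof (cases "j = 0")
        case True
        have "cm G x y \<in> lower_central G (i - 1)"
          using G.lc_cm1[OF xl yc] G.lc_step by blast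
        then show ?thesis using i True unfolding Gam_def by simp
      next
        case False
        then have yl: "y \<in> lower_central G (j - 1)" using y unfolding Gam_def by simp
        have "cm G x y \<in> lower_central G (Suc (i - 1 + (j - 1)))" by (rule G.three_sub[OF xl yl])
        moreover have "Suc (i - 1 + (j - 1)) = i + j - 1" using i False by simp
        ultimately have "cm G x y \<in> lower_central G (i + j - 1)" by (simp only:)
        moreover have "Gam G (i + j) = lower_central G (i + j - 1)" unfolding Gam_def using i by simp
        ultimately show ?thesis by (simp only:)
      qed
    qed
  qed
  show ?thesis
  proof (unfold_locales)
    show "Gam G i \<subseteq> carrier G" for i by (rule sub)
    show "\<one>\<^bsub>G\<^esub> \<in> Gam G i" for i using subgroup.one_closed[OF sg] .
    show "x \<otimes>\<^bsub>G\<^esub> y \<in> Gam G i" if "x \<in> Gam G i" "y \<in> Gam G i" for x y i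
      using subgroup.m_closed[OF sg that] .
    show "Gam G i \<subseteq> Gam G j" if "j \<le> i" for i j using anti[OF that] .
    show "cm G x y \<in> Gam G (i + j)" if "x \<in> Gam G i" "y \<in> Gam G j" for x y i j using comm[OF that] .
    show "Gam G 0 = carrier G" unfolding Gam_def by simp
    show "Gam G 1 = carrier G" unfolding Gam_def by simp
  qed
qed

lemma coord_hom:
  assumes G: "group G" and i: "i < n"
  shows "(\<lambda>h. h i) \<in> hom (power_group G n) G"
  unfolding hom_def using i by (auto simp: PiE_iff)

lemma word_pol:
  assumes G: "group G" and wv: "word_vars_in n m v" and gc: "\<forall>j<m. g j \<in> carrier G"
  shows "Pol G (power_group G n) (Gam G) s 0 (\<lambda>h. eval_word G h g v)"
  using wv
proof (induction v)
  have K: "group (power_group G n)" by (rule product_group) (rule G)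
  interpret F: filt G "power_group G n" "Gam G" by (rule Gam_filt[OF G K])
  case Nil
  show ?case using F.P_const[OF F.Gone] by simp
next
  have K: "group (power_group G n)" by (rule product_group) (rule G)
  interpret F: filt G "power_group G n" "Gam G" by (rule Gam_filt[OF G K])
  case (Cons x w)
  obtain p b where x: "x = (p, b)" by (cases x)
  have ww: "word_vars_in n m w" using Cons.prems unfolding word_vars_in_def by auto
  have pv: "(\<forall>i. p = Xv i \<longrightarrow> i < n) \<and> (\<forall>j. p = Zv j \<longrightarrow> j < m)"
    using Cons.prems x unfolding word_vars_in_def by auto
  have L: "F.P s 0 (\<lambda>h. if b then eval_var h g p else inv\<^bsub>G\<^esub> (eval_var h g p))"
  proof (cases p)
    case (Xv i)
    then have i: "i < n" using pv by auto
    show ?thesis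
    proof (cases b)
      case True then show ?thesis using F.P_hom[OF coord_hom[OF G i]] Xv by simp
    next
      case False then show ?thesis using F.P_hom_inv[OF coord_hom[OF G i]] Xv by simp
    qed
  next
    case (Zv j)
    then have gj: "g j \<in> carrier G" using pv gc by auto
    then have "g j \<in> Gam G 0" "inv\<^bsub>G\<^esub> (g j) \<in> Gam G 0" unfolding Gam_def by auto
    then show ?thesis using F.P_const Zv by (cases b) auto
  qed
  show ?case using F.P_mult[OF L Cons.IH[OF ww]] x by simp
qed

theorem theorem6p5:
  fixes G :: "('a, 'b) monoid_scheme" and k n m :: nat and v :: word
    and g :: "nat \<Rightarrow> 'a" and c :: 'a
  assumes "nilpotent_of_class G k"
    and "word_vars_in n m v"
    and "\<forall>j < m. g j \<in> carrier G"
    and "c \<in> carrier G"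
    and "m_large (power_group G n) (2 ^ k)
           {h \<in> carrier (power_group G n). eval_word G h g v = c}"
  shows "\<forall>h \<in> carrier (power_group G n). eval_word G h g v = c"
proof -
  have G: "group G" and top: "lower_central G k = {\<one>\<^bsub>G\<^esub>}"
    using assms(1) unfolding nilpotent_of_class_def by auto
  have K: "group (power_group G n)" by (rule product_group) (rule G)
  interpret F: filt G "power_group G n" "Gam G" by (rule Gam_filt[OF G K])
  let ?f = "\<lambda>h. eval_word G h g v"
  have P: "F.P (Suc k) 0 ?f" by (rule word_pol[OF G assms(2,3)])
  have D: "\<forall>as. length as = Suc k \<longrightarrow> set as \<subseteq> carrier (power_group G n) \<longrightarrow>
      (\<forall>h\<in>carrier (power_group G n). Dl G (power_group G n) as ?f h = \<one>\<^bsub>G\<^esub>)"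
  proof (intro allI impI ballI)
    fix as h assume l: "length as = Suc k" and s: "set as \<subseteq> carrier (power_group G n)"
      and h: "h \<in> carrier (power_group G n)"
    have "Dl G (power_group G n) as ?f h \<in> Gam G (0 + Suc k)" by (rule F.P_Dl[OF P l s h])
    then show "Dl G (power_group G n) as ?f h = \<one>\<^bsub>G\<^esub>" using top unfolding Gam_def by simp
  qed
  have V: "\<forall>h\<in>carrier (power_group G n). ?f h \<in> carrier G"
    using F.P_car[OF P] by blast
  show ?thesis using comb[OF G K D V assms(4) assms(5)] .
qed

end
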